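(* Let $S$ be a rectangular domain, $\bar\eta$ a flow field on $\mathbb{E}(\bar S)$, and $\ell,\ell'\subseteq\bar S$ broken traces with $w_\eta(\ell)>0$ and $w_\eta(\ell')>0$. Then $\ell\succeq\ell'$ or $\ell'\succeq\ell$.
   Context: Lattice and edges. $\tilde{\mathbb{Z}}^2=\{(t,x)\in\mathbb{Z}^2:t+x\text{ even}\}$; edges $\langle y,y'\rangle$ join points at distance $\sqrt2$. For $y=(t,x)$: - $e^\nearrow_y=\langle(t,x),(t+1,x+1)\rangle$, - $e^\searrow_y=\langle(t,x),(t+1,x-1)\rangle$, - $e^\swarrow_y=\langle(t-1,x-1),(t,x)\rangle$, - $e^\nwarrow_y=\langle(t-1,x+1),(t,x)\rangle$. Domains. A rectangular domain is a nonempty set $S=\{(t,x)\in\tilde{\mathbb{Z}}^2: a\le t+x\le b,\ c\le t-x\le d\}$ with even integers $a\le b$, $c\le d$. $\bar S$ is $S$ together with all points joined by an edge to a point of $S$; $\partial\bar S=\bar S\setminus S$; $\mathbb{E}(\bar S)$ is the set of edges with at least one endpoint in $S$. Flow field. A flow field is $\eta(e)\ge0$, $e\in\mathbb{E}(\bar S)$, with $\eta(e^\nwarrow_y)+\eta(e^\nearrow_y)=\eta(e^\swarrow_y)+\eta(e^\searrow_y)$ for all $y\in S$; its birth field is $\xi_y=\eta(e^\nearrow_y)\wedge\eta(e^\searrow_y)$. Association. For $y\in S$, a lower edge $f_1\in\{e^\swarrow_y,e^\searrow_y\}$ with $p_1\in(0,\eta(f_1)]$, and an upper edge $f_2\in\{e^\nwarrow_y,e^\nearrow_y\}$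 with $p_2\in(0,\eta(f_2)]$, write $(f_1,p_1)\sim_y(f_2,p_2)$ exactly when: - Case 1: $f_1=e^\swarrow_y$, $f_2=e^\nwarrow_y$, $p_1\le\eta(f_1)\wedge\eta(f_2)$, $p_2=p_1$; - Case 2: $f_1=e^\searrow_y$, $f_2=e^\nwarrow_y$, $p_2>\eta(e^\swarrow_y)$, $p_1=p_2-\eta(e^\swarrow_y)$; - Case 3: $f_1=e^\swarrow_y$, $f_2=e^\nearrow_y$, $p_1>\eta(e^\nwarrow_y)$, $p_2=p_1-\eta(e^\nwarrow_y)$; - Case 4: $f_1=e^\searrow_y$, $f_2=e^\nearrow_y$, $p_i>\eta(f_i)-\xi_y$ ($i=1,2$), $\eta(f_1)-p_1=\eta(f_2)-p_2$. Broken traces. A broken trace is $\ell=(y_0,e_1,y_1,\dots,e_n,y_n)$, $n\ge1$, with $y_i=(t_i,x_i)\in\tilde{\mathbb{Z}}^2$, $e_i=\langle y_{i-1},y_i\rangle$, $x_i=x_{i-1}+1$, $t_i-t_{i-1}\in\{-1,1\}$. - $D(\ell)=\{x_0,\dots,x_n\}$, and $t_\ell(x)$ is the $t$-coordinate of the vertex of $\ell$ at second coordinate $x$. - $\ell\subseteq\bar S$ means $y_0,y_n\in\bar S$, $y_1,\dots,y_{n-1}\in S$, all $e_i\in\mathbb{E}(\bar S)$. Weight. $w_\eta(\ell)$ is the Lebesgue measure of the set of $p_1\in(0,\eta(e_1)]$ for which there exist $p_i\in(0,\eta(e_i)]$ ($i=2,\dots,n$) with $(e_{i-1},p_{i-1})\sim_{y_{i-1}}(e_i,p_i)$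 for all $i=2,\dots,n$. Order. $\ell\succeq\ell'$ means that $t_\ell(x)\ge t_{\ell'}(x)$ for all $x\in D(\ell)\cap D(\ell')$, and that $t_\ell(x)\ge t_{\ell'}(x')$ for some $x\in D(\ell)$, $x'\in D(\ell')$. *)

theory Defs
  imports "HOL-Analysis.Analysis"
begin

type_synonym pt = "int \<times> int"   (* (t, x) *)
type_synonym edge = "pt set"

definition lattice :: "pt set" where
  "lattice = {(t, x). even (t + x)}"

definition adjacent :: "pt \<Rightarrow> pt \<Rightarrow> bool" where
  "adjacent y y' \<longleftrightarrow> y \<in> lattice \<and> y' \<in> lattice \<and>
     \<bar>fst y - fst y'\<bar> = 1 \<and> \<bar>snd y - snd y'\<bar> = 1"

definition e_ne :: "pt \<Rightarrow> edge" where "e_ne y = {(fst y, snd y), (fst y + 1, snd y + 1)}"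
definition e_se :: "pt \<Rightarrow> edge" where "e_se y = {(fst y, snd y), (fst y + 1, snd y - 1)}"
definition e_sw :: "pt \<Rightarrow> edge" where "e_sw y = {(fst y - 1, snd y - 1), (fst y, snd y)}"
definition e_nw :: "pt \<Rightarrow> edge" where "e_nw y = {(fst y - 1, snd y + 1), (fst y, snd y)}"

definition rect :: "int \<Rightarrow> int \<Rightarrow> int \<Rightarrow> int \<Rightarrow> pt set" where
  "rect a b c d = {(t, x). even (t + x) \<and> a \<le> t + x \<and> t + x \<le> b \<and> c \<le> t - x \<and> t - x \<le> d}"

definition closure_dom :: "pt set \<Rightarrow> pt set" where
  "closure_dom S = S \<union> {y'. \<exists>y\<in>S. adjacent y y'}"

definition edges_of :: "pt set \<Rightarrow> edge set" where
  "edges_of S = {e. \<exists>y y'. e = {y, y'} \<and> adjacent y y' \<and> (y \<in> S \<or> y' \<in> S)}"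

definition flow_field :: "pt set \<Rightarrow> (edge \<Rightarrow> real) \<Rightarrow> bool" where
  "flow_field S \<eta> \<longleftrightarrow> (\<forall>e\<in>edges_of S. 0 \<le> \<eta> e) \<and>
     (\<forall>y\<in>S. \<eta> (e_nw y) + \<eta> (e_ne y) = \<eta> (e_sw y) + \<eta> (e_se y))"

definition birth :: "(edge \<Rightarrow> real) \<Rightarrow> pt \<Rightarrow> real" where
  "birth \<eta> y = min (\<eta> (e_ne y)) (\<eta> (e_se y))"

definition assoc :: "(edge \<Rightarrow> real) \<Rightarrow> pt \<Rightarrow> edge \<Rightarrow> real \<Rightarrow> edge \<Rightarrow> real \<Rightarrow> bool" where
  "assoc \<eta> y f1 p1 f2 p2 \<longleftrightarrow>
     f1 \<in> {e_sw y, e_se y} \<and> 0 < p1 \<and> p1 \<le> \<eta> f1 \<and>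
     f2 \<in> {e_nw y, e_ne y} \<and> 0 < p2 \<and> p2 \<le> \<eta> f2 \<and>
     ((f1 = e_sw y \<and> f2 = e_nw y \<and> p1 \<le> min (\<eta> f1) (\<eta> f2) \<and> p2 = p1) \<or>
      (f1 = e_se y \<and> f2 = e_nw y \<and> p2 > \<eta> (e_sw y) \<and> p1 = p2 - \<eta> (e_sw y)) \<or>
      (f1 = e_sw y \<and> f2 = e_ne y \<and> p1 > \<eta> (e_nw y) \<and> p2 = p1 - \<eta> (e_nw y)) \<or>
      (f1 = e_se y \<and> f2 = e_ne y \<and> p1 > \<eta> f1 - birth \<eta> y \<and> p2 > \<eta> f2 - birth \<eta> y \<and>
         \<eta> f1 - p1 = \<eta> f2 - p2))"

text \<open>A broken trace is the list of its vertices y_0, ..., y_n (n >= 1);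
  its edges are e_i = {y_(i-1), y_i}.\<close>
definition broken_trace :: "pt list \<Rightarrow> bool" where
  "broken_trace l \<longleftrightarrow> 2 \<le> length l \<and> set l \<subseteq> lattice \<and>
     (\<forall>i. i + 1 < length l \<longrightarrow> snd (l ! (i + 1)) = snd (l ! i) + 1 \<and>
                               \<bar>fst (l ! (i + 1)) - fst (l ! i)\<bar> = 1)"

definition tr_edge :: "pt list \<Rightarrow> nat \<Rightarrow> edge" where
  "tr_edge l i = {l ! (i - 1), l ! i}"

definition trace_in :: "pt list \<Rightarrow> pt set \<Rightarrow> bool" where
  "trace_in l S \<longleftrightarrow> hd l \<in> closure_dom S \<and> last l \<in> closure_dom S \<and>
     (\<forall>i. 0 < i \<and> i < length l - 1 \<longrightarrow> l ! i \<in> S) \<and>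
     (\<forall>i\<in>{1..length l - 1}. tr_edge l i \<in> edges_of S)"

definition weight :: "(edge \<Rightarrow> real) \<Rightarrow> pt list \<Rightarrow> real" where
  "weight \<eta> l = measure lebesgue
     {q. 0 < q \<and> q \<le> \<eta> (tr_edge l 1) \<and>
         (\<exists>p :: nat \<Rightarrow> real. p 1 = q \<and>
            (\<forall>i\<in>{2..length l - 1}. 0 < p i \<and> p i \<le> \<eta> (tr_edge l i) \<and>
               assoc \<eta> (l ! (i - 1)) (tr_edge l (i - 1)) (p (i - 1)) (tr_edge l i) (p i)))}"

definition dom_tr :: "pt list \<Rightarrow> int set" where
  "dom_tr l = snd ` set l"

definition t_at :: "pt list \<Rightarrow> int \<Rightarrow> int" where
  "t_at l x = fst (l ! nat (x - snd (hd l)))"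

definition trace_ge :: "pt list \<Rightarrow> pt list \<Rightarrow> bool" where
  "trace_ge l l' \<longleftrightarrow> (\<forall>x\<in>dom_tr l \<inter> dom_tr l'. t_at l x \<ge> t_at l' x) \<and>
     (\<exists>x\<in>dom_tr l. \<exists>x'\<in>dom_tr l'. t_at l x \<ge> t_at l' x')"

end

theory Submission
  imports Defs
begin

definition Lpos :: "(edge \<Rightarrow> real) \<Rightarrow> pt \<Rightarrow> edge \<Rightarrow> real \<Rightarrow> real" where
  "Lpos \<eta> y f p = (if f = e_sw y then p else \<eta> (e_sw y) + p)"
definition Rpos :: "(edge \<Rightarrow> real) \<Rightarrow> pt \<Rightarrow> edge \<Rightarrow> real \<Rightarrow> real" where
  "Rpos \<eta> y f p = (if f = e_nw y then p else \<eta> (e_nw y) + p)"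
definition EE :: "(int \<Rightarrow> int) \<Rightarrow> int \<Rightarrow> edge" where
  "EE T x = {(T (x - 1), x - 1), (T x, x)}"
definition cons :: "(edge \<Rightarrow> real) \<Rightarrow> pt \<Rightarrow> bool" where
  "cons \<eta> y \<longleftrightarrow> \<eta> (e_nw y) + \<eta> (e_ne y) = \<eta> (e_sw y) + \<eta> (e_se y)"

lemma sw_se: "e_sw y \<noteq> e_se y"
  by (cases y) (auto simp: e_sw_def e_se_def doubleton_eq_iff)

lemma nw_ne: "e_nw y \<noteq> e_ne y"
  by (cases y) (auto simp: e_nw_def e_ne_def doubleton_eq_iff)

lemma assoc_LR:
  assumes "cons \<eta> y" "assoc \<eta> y f1 p1 f2 p2"
  shows "Lpos \<eta> y f1 p1 = Rpos \<eta> y f2 p2 \<and> 0 < p1 \<and> p1 \<le> \<eta> f1 \<and> 0 < p2 \<and> p2 \<le> \<eta> f2"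
  using assms sw_se[of y] nw_ne[of y]
  unfolding assoc_def Lpos_def Rpos_def cons_def
  by auto

lemma core:
  fixes T T' :: "int \<Rightarrow> int" and P P' :: "int \<Rightarrow> real"
  assumes x12: "x1 < x2" and c1: "T x1 < T' x1" and c2: "T' x2 < T x2"
    and steps: "\<forall>x. x1 \<le> x \<and> x < x2 \<longrightarrow> \<bar>T (x+1) - T x\<bar> = 1 \<and> \<bar>T' (x+1) - T' x\<bar> = 1"
    and par: "\<forall>x. x1 \<le> x \<and> x \<le> x2 \<longrightarrow> even (T x + x) \<and> even (T' x + x)"
    and A: "\<forall>x. x1 < x \<and> x < x2 \<longrightarrow> assoc \<eta> (T x, x) (EE T x) (P x) (EE T (x+1)) (P (x+1)) \<and> cons \<eta> (T x, x)"
    and A': "\<forall>x. x1 < x \<and> x < x2 \<longrightarrow> assoc \<eta> (T' x, x) (EE T' x) (P' x) (EE T' (x+1)) (P' (x+1)) \<and> cons \<eta> (T' x, x)"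
  shows False
proof -
  define D where "D x = T x - T' x" for x
  have Dev: "even (D x)" if "x1 \<le> x" "x \<le> x2" for x
  proof -
    have "even ((T x + x) - (T' x + x))" using par that by auto
    then show ?thesis unfolding D_def by simp
  qed
  have Dstep: "\<bar>D (x+1) - D x\<bar> \<le> 2" if "x1 \<le> x" "x < x2" for x
    using steps that unfolding D_def by fastforce
  define Vs where "Vs = {x \<in> {x1..x2}. D x > 0}"
  have Vsf: "finite Vs" "Vs \<noteq> {}" using x12 c2 unfolding Vs_def D_def by (fastforce intro: finite_subset[of _ "{x1..x2}"])+
  define v' where "v' = Min Vs"
  have v'in: "v' \<in> Vs" using Vsf Min_in v'_def by blast
  have v'min: "\<And>x. x \<in> Vs \<Longrightarrow> v' \<le> x" using Vsf v'_def by auto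
  have v'gt: "x1 < v'" using v'in c1 unfolding Vs_def D_def by (cases "v' = x1") auto
  define Us where "Us = {x \<in> {x1..v'}. D x < 0}"
  have Usf: "finite Us" "Us \<noteq> {}" using v'gt c1 unfolding Us_def D_def by (fastforce intro: finite_subset[of _ "{x1..v'}"])+
  define u' where "u' = Max Us"
  have u'in: "u' \<in> Us" using Usf Max_in u'_def by blast
  have u'max: "\<And>x. x \<in> Us \<Longrightarrow> x \<le> u'" using Usf u'_def by auto
  have u'lt: "u' < v'" using u'in v'in unfolding Us_def Vs_def by (cases "u' = v'") auto
  have zero: "D x = 0" if "u' < x" "x < v'" for x
  proof -
    have "\<not> D x > 0" using v'min[of x] that u'in v'in unfolding Vs_def Us_def by fastforce
    moreover have "\<not> D x < 0" using u'max[of x] that u'in v'in unfolding Vs_def Us_def by fastforce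
    ultimately show ?thesis by simp
  qed
  have Du': "D u' \<le> -2" using u'in Dev[of u'] v'in unfolding Us_def Vs_def by auto
  have Dv': "D v' \<ge> 2" using v'in Dev[of v'] unfolding Vs_def by auto
  have x1u: "x1 \<le> u'" and v2: "v' \<le> x2" using u'in v'in unfolding Us_def Vs_def by auto
  have "u' + 1 \<noteq> v'"
  proof
    assume "u' + 1 = v'"
    then show False using Dstep[of u'] x1u v2 Du' Dv' u'lt by auto
  qed
  define u where "u = u' + 1"
  define v where "v = v' - 1"
  have uv: "u \<le> v" using u'lt \<open>u' + 1 \<noteq> v'\<close> unfolding u_def v_def by auto
  have Dz: "D x = 0" if "u \<le> x" "x \<le> v" for x using zero that unfolding u_def v_def by auto
  have Du1: "D (u - 1) = -2" using Dstep[of u'] Dz[of u] uv Du' x1u v2 u'lt unfolding u_def v_def by auto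
  have Dv1: "D (v + 1) = 2" using Dstep[of v] Dz[of v] uv Dv' x1u v2 u'lt unfolding u_def v_def by auto
  have ui: "x1 < u" and vi: "v < x2" using x1u v2 unfolding u_def v_def by auto
  have Tu1: "T (u - 1) = T u - 1" and T'u1: "T' (u - 1) = T u + 1"
    using steps[rule_format, of "u - 1"] Du1 Dz[of u] uv ui vi unfolding D_def by auto
  have Tv1: "T (v + 1) = T v + 1" and T'v1: "T' (v + 1) = T v - 1"
    using steps[rule_format, of v] Dv1 Dz[of v] uv ui vi unfolding D_def by auto
  have TT: "T x = T' x" if "u \<le> x" "x \<le> v" for x using Dz[OF that] unfolding D_def by simp
  define I where "I x \<longleftrightarrow> Rpos \<eta> (T x, x) (EE T (x+1)) (P (x+1)) < Rpos \<eta> (T x, x) (EE T' (x+1)) (P' (x+1))" for x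
  have "x \<le> v \<longrightarrow> I x" if "u \<le> x" for x
    using that
  proof (induction x rule: int_ge_induct)
    case base
    have a: "assoc \<eta> (T u, u) (EE T u) (P u) (EE T (u+1)) (P (u+1))" "cons \<eta> (T u, u)"
      using A ui vi uv by auto
    have a': "assoc \<eta> (T u, u) (EE T' u) (P' u) (EE T' (u+1)) (P' (u+1))"
      using A' ui vi uv TT[of u] by auto
    have e1: "EE T u = e_sw (T u, u)" unfolding EE_def e_sw_def using Tu1 by auto
    have e2: "EE T' u = e_se (T u, u)" unfolding EE_def e_se_def using T'u1 TT[of u] uv by auto
    note L1 = assoc_LR[OF a(2) a(1)] and L2 = assoc_LR[OF a(2) a']
    show ?case using L1 L2 e1 e2 sw_se[of "(T u, u)"] unfolding I_def Lpos_def by auto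
  next
    case (step x)
    show ?case
    proof
      assume xv: "x + 1 \<le> v"
      have Ix: "I x" using step xv by auto
      have feq: "EE T (x+1) = EE T' (x+1)" unfolding EE_def using TT[of x] TT[of "x+1"] step xv by auto
      have lt: "P (x+1) < P' (x+1)" using Ix feq unfolding I_def Rpos_def by (auto split: if_splits)
      have a: "assoc \<eta> (T (x+1), x+1) (EE T (x+1)) (P (x+1)) (EE T (x+1+1)) (P (x+1+1))" "cons \<eta> (T (x+1), x+1)"
        using A[rule_format, of "x+1"] ui vi step xv by auto
      have a': "assoc \<eta> (T (x+1), x+1) (EE T' (x+1)) (P' (x+1)) (EE T' (x+1+1)) (P' (x+1+1))"
        using A'[rule_format, of "x+1"] ui vi step xv TT[of "x+1"] by auto
      note L1 = assoc_LR[OF a(2) a(1)] and L2 = assoc_LR[OF a(2) a']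
      have "Lpos \<eta> (T (x+1), x+1) (EE T (x+1)) (P (x+1)) < Lpos \<eta> (T (x+1), x+1) (EE T' (x+1)) (P' (x+1))"
        using lt feq unfolding Lpos_def by auto
      then show "I (x+1)" using L1 L2 unfolding I_def by simp
    qed
  qed
  then have Iv: "I v" using uv by auto
  have a: "assoc \<eta> (T v, v) (EE T v) (P v) (EE T (v+1)) (P (v+1))" "cons \<eta> (T v, v)"
    using A ui vi uv by auto
  have a': "assoc \<eta> (T v, v) (EE T' v) (P' v) (EE T' (v+1)) (P' (v+1))"
    using A' ui vi uv TT[of v] by auto
  have e1: "EE T (v+1) = e_ne (T v, v)" unfolding EE_def e_ne_def using Tv1 by auto
  have e2: "EE T' (v+1) = e_nw (T v, v)" unfolding EE_def e_nw_def using T'v1 TT[of v] uv by auto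
  note L1 = assoc_LR[OF a(2) a(1)] and L2 = assoc_LR[OF a(2) a']
  show False using Iv L1 L2 e1 e2 nw_ne[of "(T v, v)"] unfolding I_def Rpos_def by auto
qed

lemma bt_snd:
  assumes "broken_trace l"
  shows "k < length l \<Longrightarrow> snd (l ! k) = snd (hd l) + int k"
proof (induction k)
  case 0
  then show ?case using assms by (auto simp: broken_trace_def hd_conv_nth)
next
  case (Suc k)
  then show ?case using assms unfolding broken_trace_def by auto
qed

lemma bt_nth:
  assumes "broken_trace l" "x \<in> {snd (hd l) .. snd (hd l) + int (length l) - 1}"
  shows "l ! nat (x - snd (hd l)) = (t_at l x, x)" "nat (x - snd (hd l)) < length l"
proof -
  show "nat (x - snd (hd l)) < length l" using assms(2) by auto
  then show "l ! nat (x - snd (hd l)) = (t_at l x, x)"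
    using bt_snd[OF assms(1)] assms(2) unfolding t_at_def by (simp add: prod_eq_iff)
qed

lemma bt_dom:
  assumes "broken_trace l"
  shows "dom_tr l = {snd (hd l) .. snd (hd l) + int (length l) - 1}"
proof
  show "dom_tr l \<subseteq> {snd (hd l) .. snd (hd l) + int (length l) - 1}"
  proof
    fix y assume "y \<in> dom_tr l"
    then obtain i where i: "i < length l" "y = snd (l ! i)" unfolding dom_tr_def by (auto simp: in_set_conv_nth)
    then show "y \<in> {snd (hd l) .. snd (hd l) + int (length l) - 1}" using bt_snd[OF assms i(1)] by auto
  qed
next
  show "{snd (hd l) .. snd (hd l) + int (length l) - 1} \<subseteq> dom_tr l"
  proof
    fix x assume x: "x \<in> {snd (hd l) .. snd (hd l) + int (length l) - 1}"
    have "l ! nat (x - snd (hd l)) \<in> set l" using bt_nth(2)[OF assms x] by simp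
    then show "x \<in> dom_tr l" unfolding dom_tr_def using bt_nth(1)[OF assms x] by force
  qed
qed

lemma trace_props:
  assumes bt: "broken_trace l" and ti: "trace_in l S" and ff: "flow_field S \<eta>" and w: "weight \<eta> l > 0"
  defines "x0 \<equiv> snd (hd l)" and "n \<equiv> length l"
  shows "\<exists>P. (\<forall>x. x0 \<le> x \<and> x < x0 + int n - 1 \<longrightarrow> \<bar>t_at l (x+1) - t_at l x\<bar> = 1)
    \<and> (\<forall>x. x0 \<le> x \<and> x \<le> x0 + int n - 1 \<longrightarrow> even (t_at l x + x))
    \<and> (\<forall>x. x0 < x \<and> x < x0 + int n - 1 \<longrightarrow>
         assoc \<eta> (t_at l x, x) (EE (t_at l) x) (P x) (EE (t_at l) (x+1)) (P (x+1)) \<and> cons \<eta> (t_at l x, x))"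
proof -
  let ?W = "{q. 0 < q \<and> q \<le> \<eta> (tr_edge l 1) \<and>
         (\<exists>p :: nat \<Rightarrow> real. p 1 = q \<and>
            (\<forall>i\<in>{2..length l - 1}. 0 < p i \<and> p i \<le> \<eta> (tr_edge l i) \<and>
               assoc \<eta> (l ! (i - 1)) (tr_edge l (i - 1)) (p (i - 1)) (tr_edge l i) (p i)))}"
  have "?W \<noteq> {}" using w unfolding weight_def by (metis less_irrefl measure_empty)
  then obtain p :: "nat \<Rightarrow> real" where p: "\<forall>i\<in>{2..length l - 1}.
      assoc \<eta> (l ! (i - 1)) (tr_edge l (i - 1)) (p (i - 1)) (tr_edge l i) (p i)" by blast
  define P where "P x = p (nat (x - x0))" for x
  have nth: "l ! nat (x - x0) = (t_at l x, x)" "nat (x - x0) < n" if "x0 \<le> x" "x \<le> x0 + int n - 1" for x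
    using bt_nth[OF bt, of x] that unfolding x0_def n_def by auto
  have S1: "\<bar>t_at l (x+1) - t_at l x\<bar> = 1" if "x0 \<le> x" "x < x0 + int n - 1" for x
  proof -
    have k: "nat (x + 1 - x0) = nat (x - x0) + 1" using that by auto
    have "\<bar>fst (l ! (nat (x - x0) + 1)) - fst (l ! nat (x - x0))\<bar> = 1"
      using bt that unfolding broken_trace_def n_def by auto
    then show ?thesis using nth[of x] nth[of "x+1"] that k by auto
  qed
  have S2: "even (t_at l x + x)" if "x0 \<le> x" "x \<le> x0 + int n - 1" for x
  proof -
    have "l ! nat (x - x0) \<in> set l" using nth(2)[OF that] unfolding n_def by simp
    then have "l ! nat (x - x0) \<in> lattice" using bt unfolding broken_trace_def by auto
    then show ?thesis using nth(1)[OF that] unfolding lattice_def by auto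
  qed
  have S3: "assoc \<eta> (t_at l x, x) (EE (t_at l) x) (P x) (EE (t_at l) (x+1)) (P (x+1)) \<and> cons \<eta> (t_at l x, x)"
    if "x0 < x" "x < x0 + int n - 1" for x
  proof -
    define j where "j = nat (x - x0)"
    have j: "0 < j" "j + 1 < n" using that unfolding j_def by auto
    have "Suc j \<in> {2..length l - 1}" using j unfolding n_def by auto
    then have a: "assoc \<eta> (l ! j) (tr_edge l j) (p j) (tr_edge l (Suc j)) (p (Suc j))" using p by fastforce
    have lj: "l ! j = (t_at l x, x)" using nth[of x] that unfolding j_def by auto
    have k1: "nat (x - 1 - x0) = j - 1" using that unfolding j_def by auto
    have k2: "nat (x + 1 - x0) = Suc j" using that unfolding j_def by auto
    have lj1: "l ! (j - 1) = (t_at l (x-1), x-1)" using nth[of "x-1"] that k1 by simp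
    have lj2: "l ! (Suc j) = (t_at l (x+1), x+1)" using nth[of "x+1"] that k2 by simp
    have e1: "tr_edge l j = EE (t_at l) x" unfolding tr_edge_def EE_def using lj lj1 by auto
    have e2: "tr_edge l (Suc j) = EE (t_at l) (x+1)" unfolding tr_edge_def EE_def using lj lj2 by auto
    have P1: "P x = p j" "P (x+1) = p (Suc j)" using k2 by (simp_all add: P_def j_def)
    have "l ! j \<in> S" using ti j unfolding trace_in_def n_def by auto
    then have c: "cons \<eta> (t_at l x, x)" using ff lj unfolding flow_field_def cons_def by auto
    show ?thesis using a e1 e2 P1 lj c by simp
  qed
  show ?thesis using S1 S2 S3 by blast
qed

theorem mainTheorem8:
  fixes a b c d :: int and \<eta> :: "edge \<Rightarrow> real" and l l' :: "pt list"
  assumes "even a" "even b" "even c" "even d" "a \<le> b" "c \<le> d"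
    and "flow_field (rect a b c d) \<eta>"
    and "broken_trace l" "broken_trace l'"
    and "trace_in l (rect a b c d)" "trace_in l' (rect a b c d)"
    and "weight \<eta> l > 0" "weight \<eta> l' > 0"
  shows "trace_ge l l' \<or> trace_ge l' l"
proof (rule ccontr)
  assume neg: "\<not> (trace_ge l l' \<or> trace_ge l' l)"
  obtain P where P: "(\<forall>x. snd (hd l) \<le> x \<and> x < snd (hd l) + int (length l) - 1 \<longrightarrow> \<bar>t_at l (x+1) - t_at l x\<bar> = 1)
    \<and> (\<forall>x. snd (hd l) \<le> x \<and> x \<le> snd (hd l) + int (length l) - 1 \<longrightarrow> even (t_at l x + x))
    \<and> (\<forall>x. snd (hd l) < x \<and> x < snd (hd l) + int (length l) - 1 \<longrightarrow>
         assoc \<eta> (t_at l x, x) (EE (t_at l) x) (P x) (EE (t_at l) (x+1)) (P (x+1)) \<and> cons \<eta> (t_at l x, x))"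
    using trace_props[OF assms(8) assms(10) assms(7) assms(12)] by blast
  obtain P' where P': "(\<forall>x. snd (hd l') \<le> x \<and> x < snd (hd l') + int (length l') - 1 \<longrightarrow> \<bar>t_at l' (x+1) - t_at l' x\<bar> = 1)
    \<and> (\<forall>x. snd (hd l') \<le> x \<and> x \<le> snd (hd l') + int (length l') - 1 \<longrightarrow> even (t_at l' x + x))
    \<and> (\<forall>x. snd (hd l') < x \<and> x < snd (hd l') + int (length l') - 1 \<longrightarrow>
         assoc \<eta> (t_at l' x, x) (EE (t_at l') x) (P' x) (EE (t_at l') (x+1)) (P' (x+1)) \<and> cons \<eta> (t_at l' x, x))"
    using trace_props[OF assms(9) assms(11) assms(7) assms(13)] by blast
  have D: "dom_tr l = {snd (hd l) .. snd (hd l) + int (length l) - 1}" using bt_dom[OF assms(8)] .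
  have D': "dom_tr l' = {snd (hd l') .. snd (hd l') + int (length l') - 1}" using bt_dom[OF assms(9)] .
  have ne: "snd (hd l) \<in> dom_tr l" "snd (hd l') \<in> dom_tr l'"
    using D D' assms(8,9) unfolding broken_trace_def by auto
  have n1: "\<not> trace_ge l l'" and n2: "\<not> trace_ge l' l" using neg by auto
  have "\<exists>x1\<in>dom_tr l \<inter> dom_tr l'. t_at l x1 < t_at l' x1"
  proof (rule ccontr)
    assume h: "\<not> ?thesis"
    then have "\<forall>x\<in>dom_tr l \<inter> dom_tr l'. t_at l x \<ge> t_at l' x" by (metis not_less)
    then have "\<not> (\<exists>x\<in>dom_tr l. \<exists>x'\<in>dom_tr l'. t_at l x \<ge> t_at l' x')" using n1 unfolding trace_ge_def by blast
    then have lt: "t_at l (snd (hd l)) < t_at l' (snd (hd l'))" and em: "dom_tr l \<inter> dom_tr l' = {}"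
      using ne \<open>\<forall>x\<in>dom_tr l \<inter> dom_tr l'. t_at l x \<ge> t_at l' x\<close> by (meson not_le, blast)
    have c1: "\<forall>x\<in>dom_tr l' \<inter> dom_tr l. t_at l' x \<ge> t_at l x" using em by blast
    have c2: "\<exists>x\<in>dom_tr l'. \<exists>x'\<in>dom_tr l. t_at l' x \<ge> t_at l x'"
      using lt ne by (intro bexI[of _ "snd (hd l')"] bexI[of _ "snd (hd l)"]) auto
    have "trace_ge l' l" unfolding trace_ge_def using c1 c2 by blast
    then show False using n2 by blast
  qed
  then obtain x1 where x1: "x1 \<in> dom_tr l \<inter> dom_tr l'" "t_at l x1 < t_at l' x1" by blast
  have "\<exists>x2\<in>dom_tr l \<inter> dom_tr l'. t_at l' x2 < t_at l x2"
  proof (rule ccontr)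
    assume h: "\<not> ?thesis"
    then have "\<forall>x\<in>dom_tr l \<inter> dom_tr l'. t_at l' x \<ge> t_at l x" by (metis not_less)
    then have "\<not> (\<exists>x\<in>dom_tr l'. \<exists>x'\<in>dom_tr l. t_at l' x \<ge> t_at l x')" using n2 unfolding trace_ge_def by blast
    moreover have "t_at l' x1 \<ge> t_at l x1" using x1(2) by simp
    ultimately show False using x1(1) by blast
  qed
  then obtain x2 where x2: "x2 \<in> dom_tr l \<inter> dom_tr l'" "t_at l' x2 < t_at l x2" by blast
  obtain Pa Pb Pc where Pa: "\<And>x. snd (hd l) \<le> x \<Longrightarrow> x < snd (hd l) + int (length l) - 1 \<Longrightarrow> \<bar>t_at l (x+1) - t_at l x\<bar> = 1"
    and Pb: "\<And>x. snd (hd l) \<le> x \<Longrightarrow> x \<le> snd (hd l) + int (length l) - 1 \<Longrightarrow> even (t_at l x + x)"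
    and Pc: "\<And>x. snd (hd l) < x \<Longrightarrow> x < snd (hd l) + int (length l) - 1 \<Longrightarrow>
         assoc \<eta> (t_at l x, x) (EE (t_at l) x) (P x) (EE (t_at l) (x+1)) (P (x+1)) \<and> cons \<eta> (t_at l x, x)"
    using P by blast
  obtain Pa' Pb' Pc' where Pa': "\<And>x. snd (hd l') \<le> x \<Longrightarrow> x < snd (hd l') + int (length l') - 1 \<Longrightarrow> \<bar>t_at l' (x+1) - t_at l' x\<bar> = 1"
    and Pb': "\<And>x. snd (hd l') \<le> x \<Longrightarrow> x \<le> snd (hd l') + int (length l') - 1 \<Longrightarrow> even (t_at l' x + x)"
    and Pc': "\<And>x. snd (hd l') < x \<Longrightarrow> x < snd (hd l') + int (length l') - 1 \<Longrightarrow>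
         assoc \<eta> (t_at l' x, x) (EE (t_at l') x) (P' x) (EE (t_at l') (x+1)) (P' (x+1)) \<and> cons \<eta> (t_at l' x, x)"
    using P' by blast
  have b1: "snd (hd l) \<le> x1" "x1 \<le> snd (hd l) + int (length l) - 1"
     "snd (hd l') \<le> x1" "x1 \<le> snd (hd l') + int (length l') - 1" using x1(1) D D' by auto
  have b2: "snd (hd l) \<le> x2" "x2 \<le> snd (hd l) + int (length l) - 1"
     "snd (hd l') \<le> x2" "x2 \<le> snd (hd l') + int (length l') - 1" using x2(1) D D' by auto
  have "x1 \<noteq> x2" using x1 x2 by auto
  then consider "x1 < x2" | "x2 < x1" by linarith
  then show False
  proof cases
    case 1
    show False
    proof (rule core[of x1 x2 "t_at l" "t_at l'" \<eta> P P'])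
      show "\<forall>x. x1 \<le> x \<and> x < x2 \<longrightarrow> \<bar>t_at l (x+1) - t_at l x\<bar> = 1 \<and> \<bar>t_at l' (x+1) - t_at l' x\<bar> = 1"
        using Pa Pa' b1 b2 by (intro allI impI conjI) auto
      show "\<forall>x. x1 \<le> x \<and> x \<le> x2 \<longrightarrow> even (t_at l x + x) \<and> even (t_at l' x + x)"
        using Pb Pb' b1 b2 by (intro allI impI conjI) auto
      show "\<forall>x. x1 < x \<and> x < x2 \<longrightarrow> assoc \<eta> (t_at l x, x) (EE (t_at l) x) (P x) (EE (t_at l) (x+1)) (P (x+1)) \<and> cons \<eta> (t_at l x, x)"
        using Pc b1 b2 by (intro allI impI) auto
      show "\<forall>x. x1 < x \<and> x < x2 \<longrightarrow> assoc \<eta> (t_at l' x, x) (EE (t_at l') x) (P' x) (EE (t_at l') (x+1)) (P' (x+1)) \<and> cons \<eta> (t_at l' x, x)"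
        using Pc' b1 b2 by (intro allI impI) auto
    qed (use 1 x1 x2 in auto)
  next
    case 2
    show False
    proof (rule core[of x2 x1 "t_at l'" "t_at l" \<eta> P' P])
      show "\<forall>x. x2 \<le> x \<and> x < x1 \<longrightarrow> \<bar>t_at l' (x+1) - t_at l' x\<bar> = 1 \<and> \<bar>t_at l (x+1) - t_at l x\<bar> = 1"
        using Pa Pa' b1 b2 by (intro allI impI conjI) auto
      show "\<forall>x. x2 \<le> x \<and> x \<le> x1 \<longrightarrow> even (t_at l' x + x) \<and> even (t_at l x + x)"
        using Pb Pb' b1 b2 by (intro allI impI conjI) auto
      show "\<forall>x. x2 < x \<and> x < x1 \<longrightarrow> assoc \<eta> (t_at l x, x) (EE (t_at l) x) (P x) (EE (t_at l) (x+1)) (P (x+1)) \<and> cons \<eta> (t_at l x, x)"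
        using Pc b1 b2 by (intro allI impI) auto
      show "\<forall>x. x2 < x \<and> x < x1 \<longrightarrow> assoc \<eta> (t_at l' x, x) (EE (t_at l') x) (P' x) (EE (t_at l') (x+1)) (P' (x+1)) \<and> cons \<eta> (t_at l' x, x)"
        using Pc' b1 b2 by (intro allI impI) auto
    qed (use 2 x1 x2 in auto)
  qed
qed

end
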